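(* Let $\mu$ be the law of a ferromagnetic $q$-state Potts model on a finite graph $G=(V,E)$, i.e. $\mu(\mathrm s)\propto\exp\big(-J\sum_{\{v_1,v_2\}\in E}\mathbf 1\{\mathrm s(v_1)\neq \mathrm s(v_2)\}\big)$ on $\mathrm s\in Q^V$ with $|Q|=q$ and $J\ge0$. Then for all $A,B\subseteq V$, $$\mu(\mathrm s\text{ constant on }A\text{ and constant on }B)\ge\mu(\mathrm s\text{ constant on }A)\,\mu(\mathrm s\text{ constant on }B),$$ and $$\mu(\mathrm s\text{ constant on }A\cup B)\ge\tfrac1q\,\mu(\mathrm s\text{ constant on }A\text{ and constant on }B).$$
   Context: A spin configuration is constant on a set $A$ if it takes a single value on $A$ (the condition is vacuous for $|A|\le1$). *)

theory Defs
  imports "HOL-Analysis.Analysis" "HOL-Library.FuncSet"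
begin

definition const_on :: "('v \<Rightarrow> 'q) \<Rightarrow> 'v set \<Rightarrow> bool" where
  "const_on s A \<longleftrightarrow> (\<forall>x\<in>A. \<forall>y\<in>A. s x = s y)"

text \<open>Configurations: functions V \<rightarrow> Q (extensional, so the set is finite).\<close>
definition configs :: "'v set \<Rightarrow> 'q set \<Rightarrow> ('v \<Rightarrow> 'q) set" where
  "configs V Q = (V \<rightarrow>\<^sub>E Q)"

definition potts_weight :: "real \<Rightarrow> 'v set set \<Rightarrow> ('v \<Rightarrow> 'q) \<Rightarrow> real" where
  "potts_weight J E s =
     exp (- J * real (card {e \<in> E. \<exists>v1 v2. e = {v1, v2} \<and> s v1 \<noteq> s v2}))"

definition potts_Z :: "real \<Rightarrow> 'v set \<Rightarrow> 'v set set \<Rightarrow> 'q set \<Rightarrow> real" where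
  "potts_Z J V E Q = (\<Sum>s\<in>configs V Q. potts_weight J E s)"

definition potts_prob ::
  "real \<Rightarrow> 'v set \<Rightarrow> 'v set set \<Rightarrow> 'q set \<Rightarrow> (('v \<Rightarrow> 'q) \<Rightarrow> bool) \<Rightarrow> real" where
  "potts_prob J V E Q P =
     (\<Sum>s\<in>{s\<in>configs V Q. P s}. potts_weight J E s) / potts_Z J V E Q"

definition finite_graph :: "'v set \<Rightarrow> 'v set set \<Rightarrow> bool" where
  "finite_graph V E \<longleftrightarrow> finite V \<and> (\<forall>e\<in>E. e \<subseteq> V \<and> card e = 2)"

end

theory Submission
  imports Defs "HOL-Analysis.Analysis"
begin


definition ag :: "'v set set \<Rightarrow> ('v \<Rightarrow> 'q) \<Rightarrow> bool" where
  "ag c s \<longleftrightarrow> (\<forall>e\<in>c. const_on s e)"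

definition XX :: "'v set \<Rightarrow> 'q set \<Rightarrow> 'v set set \<Rightarrow> ('v \<Rightarrow> 'q) set" where
  "XX V Q c = {s\<in>configs V Q. ag c s}"

lemma XX_insert_pair:
  "XX V Q (insert {u,v} c) = {s\<in>XX V Q c. s u = s v}"
  unfolding XX_def ag_def const_on_def by auto

lemma recolor_configs:
  assumes tc: "t \<in> configs V Q" and b: "b \<in> Q" and WV: "W \<subseteq> V"
  shows "(\<lambda>w. if w \<in> W then b else t w) \<in> configs V Q"
  using tc b WV unfolding configs_def PiE_def extensional_def by auto

lemma recolor_in:
  assumes cV: "\<forall>e\<in>c. e \<subseteq> V" and t: "t \<in> XX V Q c" and b: "b \<in> Q"
    and W: "W = {w\<in>V. \<forall>s\<in>XX V Q c. s w = s u}"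
  shows "(\<lambda>w. if w \<in> W then b else t w) \<in> XX V Q c"
proof -
  have tc: "t \<in> configs V Q" and ta: "ag c t" using t unfolding XX_def by auto
  have WV: "W \<subseteq> V" using W by auto
  have "ag c (\<lambda>w. if w \<in> W then b else t w)"
    unfolding ag_def const_on_def
  proof (intro ballI)
    fix e x y assume e: "e \<in> c" and x: "x \<in> e" and y: "y \<in> e"
    have clos: "z \<in> W" if z: "z \<in> e" and z': "z' \<in> e" and zW: "z' \<in> W" for z z'
    proof -
      have zV: "z \<in> V" using cV e z by blast
      have "s z = s u" if s: "s \<in> XX V Q c" for s
      proof -
        have "ag c s" using s unfolding XX_def by simp
        then have "const_on s e" using e unfolding ag_def by blast
        then have "s z = s z'" using z z' unfolding const_on_def by blast
        moreover have "s z' = s u" using zW s unfolding W by blast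
        ultimately show "s z = s u" by simp
      qed
      then show ?thesis unfolding W using zV by blast
    qed
    show "(if x \<in> W then b else t x) = (if y \<in> W then b else t y)"
    proof (cases "x \<in> W \<or> y \<in> W")
      case True
      then have "x \<in> W" "y \<in> W" using clos x y by blast+
      then show ?thesis by simp
    next
      case False
      have "const_on t e" using ta e unfolding ag_def by blast
      then have "t x = t y" using x y unfolding const_on_def by blast
      then show ?thesis using False by simp
    qed
  qed
  then show ?thesis using recolor_configs[OF tc b WV] unfolding XX_def by blast
qed

lemma step_card:
  assumes cV: "\<forall>e\<in>c. e \<subseteq> V" and u: "u \<in> V" and v: "v \<in> V"
    and ns: "s0 \<in> XX V Q c" "s0 u \<noteq> s0 v"
  shows "card (XX V Q c) = card (XX V Q (insert {u,v} c)) * card Q"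
proof -
  define W where "W = {w\<in>V. \<forall>s\<in>XX V Q c. s w = s u}"
  have uW: "u \<in> W" using u W_def by auto
  have vW: "v \<notin> W" using ns W_def by (metis (mono_tags, lifting) mem_Collect_eq)
  define f where "f = (\<lambda>(s::'a\<Rightarrow>'b, b). (\<lambda>w. if w \<in> W then b else s w))"
  have "bij_betw f (XX V Q (insert {u,v} c) \<times> Q) (XX V Q c)"
    unfolding bij_betw_def
  proof (intro conjI)
    show "inj_on f (XX V Q (insert {u,v} c) \<times> Q)"
    proof (rule inj_onI, clarify)
      fix s b s' b'
      assume s: "s \<in> XX V Q (insert {u,v} c)" and s': "s' \<in> XX V Q (insert {u,v} c)"
        and eq: "f (s, b) = f (s', b')"
      have bb: "b = b'" using fun_cong[OF eq, of u] uW unfolding f_def by simp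
      have "s v = s' v" using fun_cong[OF eq, of v] vW unfolding f_def by simp
      moreover have "s u = s v" "s' u = s' v" using s s' by (simp_all add: XX_insert_pair)
      moreover have "s \<in> XX V Q c" "s' \<in> XX V Q c" using s s' by (simp_all add: XX_insert_pair)
      ultimately have "s w = s' w" for w
      proof (cases "w \<in> W")
        case True
        then have "s w = s u" "s' w = s' u" using \<open>s \<in> XX V Q c\<close> \<open>s' \<in> XX V Q c\<close> W_def by auto
        then show ?thesis using \<open>s v = s' v\<close> \<open>s u = s v\<close> \<open>s' u = s' v\<close> by simp
      next
        case False
        then show ?thesis using fun_cong[OF eq, of w] unfolding f_def by simp
      qed
      then show "s = s' \<and> b = b'" using bb by auto
    qed
  next
    show "f ` (XX V Q (insert {u,v} c) \<times> Q) = XX V Q c"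
    proof
      show "f ` (XX V Q (insert {u,v} c) \<times> Q) \<subseteq> XX V Q c"
        using recolor_in[OF cV _ _ W_def] unfolding f_def by (auto simp: XX_insert_pair)
    next
      show "XX V Q c \<subseteq> f ` (XX V Q (insert {u,v} c) \<times> Q)"
      proof
        fix t assume t: "t \<in> XX V Q c"
        have tQ: "t v \<in> Q" "t u \<in> Q" using t u v unfolding XX_def configs_def by auto
        define s where "s = (\<lambda>w. if w \<in> W then t v else t w)"
        have "s \<in> XX V Q c" using recolor_in[OF cV t tQ(1) W_def] s_def by simp
        moreover have "s u = s v" using uW vW s_def by simp
        ultimately have s1: "s \<in> XX V Q (insert {u,v} c)" by (simp add: XX_insert_pair)
        have "f (s, t u) = t" unfolding f_def s_def
          using t W_def by (auto simp: fun_eq_iff)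
        then show "t \<in> f ` (XX V Q (insert {u,v} c) \<times> Q)" using s1 tQ by force
      qed
    qed
  qed
  then have "card (XX V Q c) = card (XX V Q (insert {u,v} c) \<times> Q)"
    by (simp add: bij_betw_same_card)
  then show ?thesis by (simp add: card_cartesian_product)
qed

lemma step_cases:
  assumes cV: "\<forall>e\<in>c. e \<subseteq> V" and u: "u \<in> V" and v: "v \<in> V"
  shows "(XX V Q (insert {u,v} c) = XX V Q c \<and> (\<forall>s\<in>XX V Q c. s u = s v))
     \<or> card (XX V Q c) = card (XX V Q (insert {u,v} c)) * card Q"
proof (cases "\<forall>s\<in>XX V Q c. s u = s v")
  case True
  then have "XX V Q (insert {u,v} c) = XX V Q c" unfolding XX_insert_pair by blast
  then show ?thesis using True by blast
next
  case False
  then show ?thesis using step_card[OF cV u v] by blast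
qed


lemma XX_anti: "a \<subseteq> b \<Longrightarrow> XX V Q b \<subseteq> XX V Q a"
  unfolding XX_def ag_def by auto

lemma XX_finite: "finite V \<Longrightarrow> finite Q \<Longrightarrow> finite (XX V Q c)"
  unfolding XX_def configs_def by (rule finite_subset[of _ "V \<rightarrow>\<^sub>E Q"]) (auto intro: finite_PiE)

lemma XX_pos:
  assumes "finite V" "finite Q" "Q \<noteq> {}" "\<forall>e\<in>c. e \<subseteq> V"
  shows "card (XX V Q c) > 0"
proof -
  obtain a where a: "a \<in> Q" using assms by auto
  have "(\<lambda>w. if w \<in> V then a else undefined) \<in> XX V Q c"
    using a assms(4) unfolding XX_def configs_def ag_def const_on_def by (auto simp: PiE_def extensional_def)
  then show ?thesis using XX_finite[OF assms(1,2)] card_gt_0_iff by blast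
qed

lemma DR:
  assumes fin: "finite V" "finite Q" and Qne: "Q \<noteq> {}"
    and ab: "a \<subseteq> b" and bV: "\<forall>e\<in>b. e \<subseteq> V" and u: "u \<in> V" and v: "v \<in> V"
  shows "card (XX V Q b) * card (XX V Q (insert {u,v} a))
       \<le> card (XX V Q a) * card (XX V Q (insert {u,v} b))"
proof -
  have aV: "\<forall>e\<in>a. e \<subseteq> V" using ab bV by auto
  have q1: "card Q \<ge> 1" using fin Qne by (simp add: Suc_le_eq card_gt_0_iff)
  have bb: "card (XX V Q b) \<le> card (XX V Q (insert {u,v} b)) * card Q"
    using step_cases[OF bV u v, of Q] q1
    by (metis le_refl mult.right_neutral mult_le_mono2)
  from step_cases[OF aV u v, of Q] show ?thesis
  proof
    assume h: "XX V Q (insert {u, v} a) = XX V Q a \<and> (\<forall>s\<in>XX V Q a. s u = s v)"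
    then have "\<forall>s\<in>XX V Q b. s u = s v" using XX_anti[OF ab] by blast
    then have "XX V Q (insert {u, v} b) = XX V Q b" by (auto simp: XX_insert_pair)
    then show ?thesis using h by simp
  next
    assume h: "card (XX V Q a) = card (XX V Q (insert {u, v} a)) * card Q"
    have "card (XX V Q b) * card (XX V Q (insert {u,v} a))
        \<le> card (XX V Q (insert {u,v} b)) * card Q * card (XX V Q (insert {u,v} a))"
      using bb by simp
    also have "\<dots> = card (XX V Q a) * card (XX V Q (insert {u,v} b))" using h by simp
    finally show ?thesis .
  qed
qed

definition pairsV :: "'v set \<Rightarrow> 'v set set" where
  "pairsV V = {e. \<exists>u v. u \<in> V \<and> v \<in> V \<and> e = {u,v}}"

lemma supermod_aux:
  assumes fin: "finite V" "finite Q" and Qne: "Q \<noteq> {}"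
    and D: "finite D" "D \<subseteq> pairsV V"
    and ab: "a \<subseteq> b" and bV: "\<forall>e\<in>b. e \<subseteq> V"
  shows "card (XX V Q b) * card (XX V Q (a \<union> D)) \<le> card (XX V Q a) * card (XX V Q (b \<union> D))"
  using D
proof (induction D rule: finite_induct)
  case empty
  then show ?case by simp
next
  case (insert e D)
  obtain u v where uv: "u \<in> V" "v \<in> V" "e = {u,v}" using insert.prems unfolding pairsV_def by auto
  have IH: "card (XX V Q b) * card (XX V Q (a \<union> D)) \<le> card (XX V Q a) * card (XX V Q (b \<union> D))"
    using insert by auto
  have bDV: "\<forall>e\<in>b \<union> D. e \<subseteq> V" using bV insert.prems unfolding pairsV_def by auto
  have dr: "card (XX V Q (b \<union> D)) * card (XX V Q (insert {u,v} (a \<union> D)))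
       \<le> card (XX V Q (a \<union> D)) * card (XX V Q (insert {u,v} (b \<union> D)))"
    using DR[OF fin Qne _ bDV uv(1,2), of "a \<union> D"] ab by auto
  have pa: "card (XX V Q (a \<union> D)) > 0" using XX_pos[OF fin Qne] bDV ab by blast
  have pb: "card (XX V Q (b \<union> D)) > 0" using XX_pos[OF fin Qne bDV] .
  define xa where "xa = card (XX V Q a)"
  define xb where "xb = card (XX V Q b)"
  define ya where "ya = card (XX V Q (a \<union> D))"
  define yb where "yb = card (XX V Q (b \<union> D))"
  define za where "za = card (XX V Q (insert {u,v} (a \<union> D)))"
  define zb where "zb = card (XX V Q (insert {u,v} (b \<union> D)))"
  have "(xb * za) * (ya * yb) \<le> (xa * zb) * (ya * yb)"
  proof -
    have "(xb * za) * (ya * yb) = (xb * ya) * (yb * za)" by (simp add: algebra_simps)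
    also have "\<dots> \<le> (xa * yb) * (ya * zb)"
      using mult_le_mono[OF IH dr] unfolding xa_def xb_def ya_def yb_def za_def zb_def by simp
    also have "\<dots> = (xa * zb) * (ya * yb)" by (simp add: algebra_simps)
    finally show ?thesis .
  qed
  then have "xb * za \<le> xa * zb" using pa pb unfolding ya_def yb_def by simp
  then show ?case unfolding xa_def xb_def za_def zb_def uv(3) by simp
qed

lemma supermod:
  assumes fin: "finite V" "finite Q" and Qne: "Q \<noteq> {}"
    and x: "finite x" "x \<subseteq> pairsV V" and yV: "\<forall>e\<in>y. e \<subseteq> V"
  shows "card (XX V Q x) * card (XX V Q y) \<le> card (XX V Q (x \<union> y)) * card (XX V Q (x \<inter> y))"
proof -
  have "card (XX V Q y) * card (XX V Q ((x \<inter> y) \<union> (x - y)))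
      \<le> card (XX V Q (x \<inter> y)) * card (XX V Q (y \<union> (x - y)))"
    by (rule supermod_aux[OF fin Qne]) (use x yV in auto)
  moreover have "(x \<inter> y) \<union> (x - y) = x" "y \<union> (x - y) = x \<union> y" by auto
  ultimately show ?thesis by (simp add: mult.commute)
qed



lemma AD1:
  fixes a0 a1 b0 b1 c0 c1 d0 d1 :: real
  assumes nn: "a0 \<ge> 0" "a1 \<ge> 0" "b0 \<ge> 0" "b1 \<ge> 0" "c0 \<ge> 0" "c1 \<ge> 0" "d0 \<ge> 0" "d1 \<ge> 0"
    and h00: "a0 * b0 \<le> c0 * d0" and h01: "a0 * b1 \<le> c1 * d0"
    and h10: "a1 * b0 \<le> c1 * d0" and h11: "a1 * b1 \<le> c1 * d1"
  shows "(a0 + a1) * (b0 + b1) \<le> (c0 + c1) * (d0 + d1)"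
proof (cases "c1 * d0 = 0")
  case True
  have "a0 * b1 \<le> 0" "a1 * b0 \<le> 0" using h01 h10 True by auto
  then have "a0 * b1 = 0" "a1 * b0 = 0" using nn by (meson antisym mult_nonneg_nonneg)+
  moreover have "a1 * b1 \<le> c1 * d1" by fact
  moreover have "0 \<le> c0 * d1" "0 \<le> c1 * d0" using nn by auto
  moreover have "(a0 + a1) * (b0 + b1) = a0*b0 + a0*b1 + a1*b0 + a1*b1"
    "(c0+c1)*(d0+d1) = c0*d0+c0*d1+c1*d0+c1*d1" by (simp_all add: algebra_simps)
  ultimately show ?thesis using h00 by linarith
next
  case False
  define X where "X = c1 * d0"
  have Xp: "X > 0" using False nn X_def by (simp add: less_le)
  have prod: "(a0 * b1) * (a1 * b0) \<le> X * (c0 * d1)"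
  proof -
    have "(a0 * b1) * (a1 * b0) = (a0 * b0) * (a1 * b1)" by (simp add: algebra_simps)
    also have "\<dots> \<le> (c0 * d0) * (c1 * d1)" using mult_mono[OF h00 h11] nn by simp
    also have "\<dots> = X * (c0 * d1)" unfolding X_def by (simp add: algebra_simps)
    finally show ?thesis .
  qed
  have "(X - a0 * b1) * (X - a1 * b0) \<ge> 0" using h01 h10 X_def by (intro mult_nonneg_nonneg) auto
  then have "X * (a0 * b1 + a1 * b0) \<le> X * X + (a0 * b1) * (a1 * b0)" by (simp add: algebra_simps)
  also have "\<dots> \<le> X * (X + c0 * d1)" using prod by (simp add: algebra_simps)
  finally have "a0 * b1 + a1 * b0 \<le> X + c0 * d1" using Xp by simp
  then show ?thesis using h00 h11 X_def by (simp add: algebra_simps)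
qed

lemma sum_Pow_insert:
  assumes "finite F" "x \<notin> F"
  shows "(\<Sum>a\<in>Pow (insert x F). h a) = (\<Sum>a\<in>Pow F. h a + h (insert x a))"
proof -
  have inj: "inj_on (insert x) (Pow F)" using assms(2) by (auto simp: inj_on_def)
  have disj: "Pow F \<inter> insert x ` Pow F = {}" using assms(2) by auto
  have "(\<Sum>a\<in>Pow (insert x F). h a) = (\<Sum>a\<in>Pow F. h a) + (\<Sum>a\<in>insert x ` Pow F. h a)"
    unfolding Pow_insert using assms(1) disj by (intro sum.union_disjoint) auto
  also have "(\<Sum>a\<in>insert x ` Pow F. h a) = (\<Sum>a\<in>Pow F. h (insert x a))"
    using sum.reindex[OF inj] by simp
  finally show ?thesis by (simp add: sum.distrib)
qed

lemma AD:
  fixes \<alpha> \<beta> \<gamma> \<delta> :: "'a set \<Rightarrow> real"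
  assumes "finite S"
    and "\<And>a. a \<subseteq> S \<Longrightarrow> \<alpha> a \<ge> 0 \<and> \<beta> a \<ge> 0 \<and> \<gamma> a \<ge> 0 \<and> \<delta> a \<ge> 0"
    and "\<And>a b. a \<subseteq> S \<Longrightarrow> b \<subseteq> S \<Longrightarrow> \<alpha> a * \<beta> b \<le> \<gamma> (a \<union> b) * \<delta> (a \<inter> b)"
  shows "(\<Sum>a\<in>Pow S. \<alpha> a) * (\<Sum>a\<in>Pow S. \<beta> a) \<le> (\<Sum>a\<in>Pow S. \<gamma> a) * (\<Sum>a\<in>Pow S. \<delta> a)"
  using assms
proof (induction S arbitrary: \<alpha> \<beta> \<gamma> \<delta> rule: finite_induct)
  case empty
  then show ?case by simp
next
  case (insert x F)
  let ?a = "\<lambda>a. \<alpha> a + \<alpha> (insert x a)"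
  let ?b = "\<lambda>a. \<beta> a + \<beta> (insert x a)"
  let ?c = "\<lambda>a. \<gamma> a + \<gamma> (insert x a)"
  let ?d = "\<lambda>a. \<delta> a + \<delta> (insert x a)"
  have "(\<Sum>a\<in>Pow F. ?a a) * (\<Sum>a\<in>Pow F. ?b a) \<le> (\<Sum>a\<in>Pow F. ?c a) * (\<Sum>a\<in>Pow F. ?d a)"
  proof (rule insert.IH)
    fix a assume a: "a \<subseteq> F"
    then show "?a a \<ge> 0 \<and> ?b a \<ge> 0 \<and> ?c a \<ge> 0 \<and> ?d a \<ge> 0"
    proof -
      have "a \<subseteq> insert x F" "insert x a \<subseteq> insert x F" using a by auto
      from insert.prems(1)[OF this(1)] insert.prems(1)[OF this(2)] show ?thesis by auto
    qed
  next
    fix a b assume a: "a \<subseteq> F" and b: "b \<subseteq> F"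
    have xa: "x \<notin> a" "x \<notin> b" using a b insert.hyps by auto
    have nn: "\<And>z. z \<subseteq> insert x F \<Longrightarrow> \<alpha> z \<ge> 0 \<and> \<beta> z \<ge> 0 \<and> \<gamma> z \<ge> 0 \<and> \<delta> z \<ge> 0"
      by (rule insert.prems(1))
    have s1: "a \<subseteq> insert x F" "insert x a \<subseteq> insert x F" "b \<subseteq> insert x F" "insert x b \<subseteq> insert x F"
      "a \<union> b \<subseteq> insert x F" "insert x (a \<union> b) \<subseteq> insert x F"
      "a \<inter> b \<subseteq> insert x F" "insert x (a \<inter> b) \<subseteq> insert x F" using a b by auto
    have e1: "a \<union> insert x b = insert x (a \<union> b)" "a \<inter> insert x b = a \<inter> b"
      "insert x a \<union> b = insert x (a \<union> b)" "insert x a \<inter> b = a \<inter> b"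
      "insert x a \<union> insert x b = insert x (a \<union> b)" "insert x a \<inter> insert x b = insert x (a \<inter> b)"
      using xa by auto
    show "?a a * ?b b \<le> ?c (a \<union> b) * ?d (a \<inter> b)"
      apply (rule AD1)
      using nn[OF s1(1)] nn[OF s1(2)] nn[OF s1(3)] nn[OF s1(4)] nn[OF s1(5)] nn[OF s1(6)]
        nn[OF s1(7)] nn[OF s1(8)] apply auto[8]
      using insert.prems(2)[OF s1(1) s1(3)] insert.prems(2)[OF s1(1) s1(4)]
        insert.prems(2)[OF s1(2) s1(3)] insert.prems(2)[OF s1(2) s1(4)] e1 by auto
  qed
  then show ?case by (simp only: sum_Pow_insert[OF insert.hyps])
qed



lemma prod_of_bool_real:
  "finite X \<Longrightarrow> (\<Prod>x\<in>X. (of_bool (P x) :: real)) = of_bool (\<forall>x\<in>X. P x)"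
  by (induction X rule: finite_induct) auto

lemma weight_prod:
  assumes fg: "finite_graph V E"
  shows "potts_weight J E s = (\<Prod>e\<in>E. exp (-J) + (1 - exp (-J)) * of_bool (const_on s e))"
proof -
  have fE: "finite E" using fg unfolding finite_graph_def
    by (meson Pow_iff finite_Pow_iff finite_subset subsetI)
  have D: "{e \<in> E. \<exists>v1 v2. e = {v1, v2} \<and> s v1 \<noteq> s v2} = E \<inter> {e. \<not> const_on s e}"
  proof (intro set_eqI iffI)
    fix e assume "e \<in> {e \<in> E. \<exists>v1 v2. e = {v1, v2} \<and> s v1 \<noteq> s v2}"
    then show "e \<in> E \<inter> {e. \<not> const_on s e}" unfolding const_on_def by auto
  next
    fix e assume e: "e \<in> E \<inter> {e. \<not> const_on s e}"
    then have "card e = 2" using fg unfolding finite_graph_def by auto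
    then obtain x y where "e = {x,y}" "x \<noteq> y" by (auto simp: card_2_iff)
    then show "e \<in> {e \<in> E. \<exists>v1 v2. e = {v1, v2} \<and> s v1 \<noteq> s v2}" using e
      unfolding const_on_def by auto
  qed
  have "(\<Prod>e\<in>E. exp (-J) + (1 - exp (-J)) * of_bool (const_on s e))
      = (\<Prod>e\<in>E. if \<not> const_on s e then exp (-J) else 1)"
    by (intro prod.cong) auto
  also have "\<dots> = exp (-J) ^ card (E \<inter> {e. \<not> const_on s e})"
    using fE by (simp add: prod.If_cases)
  also have "\<dots> = exp (- J * real (card (E \<inter> {e. \<not> const_on s e})))"
    by (metis exp_of_nat_mult mult.commute)
  finally show ?thesis unfolding potts_weight_def D by simp
qed

lemma FK:
  assumes fg: "finite_graph V E" and fQ: "finite Q"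
  shows "(\<Sum>s\<in>{s\<in>configs V Q. P s}. potts_weight J E s)
    = (\<Sum>\<omega>\<in>Pow E. (1 - exp (-J)) ^ card \<omega> * exp (-J) ^ card (E - \<omega>)
          * real (card {s\<in>configs V Q. P s \<and> ag \<omega> s}))"
proof -
  have fE: "finite E" using fg unfolding finite_graph_def
    by (meson Pow_iff finite_Pow_iff finite_subset subsetI)
  have fV: "finite V" using fg unfolding finite_graph_def by auto
  have fS: "finite {s\<in>configs V Q. P s}"
    using fV fQ unfolding configs_def by (rule_tac finite_subset[of _ "V \<rightarrow>\<^sub>E Q"]) (auto intro: finite_PiE)
  define r where "r = exp (-J)"
  have w: "potts_weight J E s = (\<Sum>\<omega>\<in>Pow E. (1 - r) ^ card \<omega> * r ^ card (E - \<omega>) * of_bool (ag \<omega> s))" for s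
  proof -
    have "potts_weight J E s = (\<Prod>e\<in>E. (1 - r) * of_bool (const_on s e) + r)"
      unfolding weight_prod[OF fg] r_def by (simp add: add.commute)
    also have "\<dots> = (\<Sum>X\<in>Pow E. (\<Prod>e\<in>X. (1 - r) * of_bool (const_on s e)) * (\<Prod>e\<in>E - X. r))"
      by (rule prod_add[OF fE])
    also have "\<dots> = (\<Sum>\<omega>\<in>Pow E. (1 - r) ^ card \<omega> * r ^ card (E - \<omega>) * of_bool (ag \<omega> s))"
    proof (rule sum.cong[OF refl])
      fix X assume "X \<in> Pow E"
      then have fX: "finite X" using fE finite_subset by auto
      show "(\<Prod>e\<in>X. (1 - r) * of_bool (const_on s e)) * (\<Prod>e\<in>E - X. r)
          = (1 - r) ^ card X * r ^ card (E - X) * of_bool (ag X s)"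
        using fX by (simp add: prod.distrib prod_of_bool_real ag_def)
    qed
    finally show ?thesis .
  qed
  have "(\<Sum>s\<in>{s\<in>configs V Q. P s}. potts_weight J E s)
      = (\<Sum>\<omega>\<in>Pow E. \<Sum>s\<in>{s\<in>configs V Q. P s}. (1 - r) ^ card \<omega> * r ^ card (E - \<omega>) * of_bool (ag \<omega> s))"
    unfolding w by (rule sum.swap)
  also have "\<dots> = (\<Sum>\<omega>\<in>Pow E. (1 - r) ^ card \<omega> * r ^ card (E - \<omega>)
          * real (card {s\<in>configs V Q. P s \<and> ag \<omega> s}))"
  proof (rule sum.cong[OF refl])
    fix \<omega>
    have "{s\<in>configs V Q. P s} \<inter> {s. ag \<omega> s} = {s\<in>configs V Q. P s \<and> ag \<omega> s}" by auto
    then show "(\<Sum>s\<in>{s\<in>configs V Q. P s}. (1 - r) ^ card \<omega> * r ^ card (E - \<omega>) * of_bool (ag \<omega> s))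
        = (1 - r) ^ card \<omega> * r ^ card (E - \<omega>) * real (card {s\<in>configs V Q. P s \<and> ag \<omega> s})"
      using fS by (simp add: sum_distrib_left[symmetric])
  qed
  finally show ?thesis unfolding r_def .
qed



definition star :: "'v set \<Rightarrow> 'v set set" where
  "star A = (\<lambda>x. {SOME a. a \<in> A, x}) ` A"

lemma star_ag: "ag (star A) s \<longleftrightarrow> const_on s A"
proof (cases "A = {}")
  case True then show ?thesis unfolding star_def ag_def const_on_def by auto
next
  case False
  define a0 where "a0 = (SOME a. a \<in> A)"
  have a0: "a0 \<in> A" using False a0_def by (simp add: some_in_eq)
  have "ag (star A) s \<longleftrightarrow> (\<forall>x\<in>A. s a0 = s x)"
    unfolding star_def ag_def const_on_def a0_def[symmetric] by auto
  also have "\<dots> \<longleftrightarrow> const_on s A" unfolding const_on_def using a0 by metis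
  finally show ?thesis .
qed

lemma star_pairs: "A \<subseteq> V \<Longrightarrow> star A \<subseteq> pairsV V"
  unfolding star_def pairsV_def
  by (auto) (metis (mono_tags) empty_iff some_in_eq subsetD)

lemma star_finite: "finite A \<Longrightarrow> finite (star A)"
  unfolding star_def by simp

lemma pairs_sub: "e \<in> pairsV V \<Longrightarrow> e \<subseteq> V"
  unfolding pairsV_def by auto

lemma step_le:
  assumes "\<forall>e\<in>c. e \<subseteq> V" "u \<in> V" "v \<in> V" "finite Q" "Q \<noteq> {}"
  shows "card (XX V Q c) \<le> card Q * card (XX V Q (insert {u,v} c))"
proof -
  have q1: "card Q \<ge> 1" using assms by (simp add: Suc_le_eq card_gt_0_iff)
  show ?thesis using step_cases[OF assms(1-3), of Q] q1
    by (metis le_refl mult.commute mult.right_neutral mult_le_mono2)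
qed

lemma const_on_Un:
  assumes "a0 \<in> A" "b0 \<in> B"
  shows "const_on s (A \<union> B) \<longleftrightarrow> const_on s A \<and> const_on s B \<and> s a0 = s b0"
proof
  assume "const_on s (A \<union> B)"
  then show "const_on s A \<and> const_on s B \<and> s a0 = s b0"
    using assms unfolding const_on_def by blast
next
  assume h: "const_on s A \<and> const_on s B \<and> s a0 = s b0"
  show "const_on s (A \<union> B)" unfolding const_on_def
  proof (intro ballI)
    fix x y assume x: "x \<in> A \<union> B" and y: "y \<in> A \<union> B"
    have "s x = s a0" using x h assms unfolding const_on_def by (metis UnE)
    moreover have "s y = s a0" using y h assms unfolding const_on_def by (metis UnE)
    ultimately show "s x = s y" by simp
  qed
qed

lemma const_on_empty: "const_on s {}"
  unfolding const_on_def by simp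

theorem lemma4p3:
  fixes V :: "'v set" and E :: "'v set set" and Q :: "'q set"
    and q :: nat and J :: real and A B :: "'v set"
  assumes "finite_graph V E"
    and "finite Q" and "card Q = q" and "q \<ge> 1"
    and "J \<ge> 0"
    and "A \<subseteq> V" and "B \<subseteq> V"
  shows "potts_prob J V E Q (\<lambda>s. const_on s A \<and> const_on s B)
           \<ge> potts_prob J V E Q (\<lambda>s. const_on s A) * potts_prob J V E Q (\<lambda>s. const_on s B)
       \<and> potts_prob J V E Q (\<lambda>s. const_on s (A \<union> B))
           \<ge> (1 / real q) * potts_prob J V E Q (\<lambda>s. const_on s A \<and> const_on s B)"
proof -
  note fg = assms(1)
  have fE: "finite E" using fg unfolding finite_graph_def
    by (meson Pow_iff finite_Pow_iff finite_subset subsetI)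
  have fV: "finite V" using fg unfolding finite_graph_def by auto
  have fQ: "finite Q" and Qne: "Q \<noteq> {}" using assms(2-4) by auto
  have EP: "E \<subseteq> pairsV V"
  proof
    fix e assume e: "e \<in> E"
    then have "card e = 2" "e \<subseteq> V" using fg unfolding finite_graph_def by auto
    then show "e \<in> pairsV V" unfolding pairsV_def by (auto simp: card_2_iff)
  qed
  have EV: "\<forall>e\<in>E. e \<subseteq> V" using EP pairs_sub by blast
  define r where "r = exp (-J)"
  have r0: "r > 0" and r1: "r \<le> 1" using assms(5) unfolding r_def by auto
  define w where "w = (\<lambda>\<omega>. (1 - r) ^ card \<omega> * r ^ card (E - \<omega>))"
  have w0: "w \<omega> \<ge> 0" for \<omega> unfolding w_def using r0 r1 by simp
  define ZZ where "ZZ = (\<lambda>P. (\<Sum>s\<in>{s\<in>configs V Q. P s}. potts_weight J E s))"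
  have ZZfk: "ZZ P = (\<Sum>\<omega>\<in>Pow E. w \<omega> * real (card {s\<in>configs V Q. P s \<and> ag \<omega> s}))" for P
    unfolding ZZ_def w_def r_def by (rule FK[OF fg fQ])
  have pp: "potts_prob J V E Q P = ZZ P / ZZ (\<lambda>_. True)" for P
    unfolding potts_prob_def potts_Z_def ZZ_def by simp
  define SA where "SA = star A"
  define SB where "SB = star B"
  have fA: "finite A" "finite B" using assms(6,7) fV finite_subset by auto
  have SAP: "SA \<subseteq> pairsV V" "SB \<subseteq> pairsV V" "finite SA" "finite SB"
    unfolding SA_def SB_def using star_pairs assms(6,7) star_finite fA by auto
  have setA: "{s\<in>configs V Q. const_on s A \<and> ag \<omega> s} = XX V Q (\<omega> \<union> SA)" for \<omega>
    unfolding XX_def SA_def using star_ag[of A] by (auto simp: ag_def)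
  have setB: "{s\<in>configs V Q. const_on s B \<and> ag \<omega> s} = XX V Q (\<omega> \<union> SB)" for \<omega>
    unfolding XX_def SB_def using star_ag[of B] by (auto simp: ag_def)
  have setAB: "{s\<in>configs V Q. (const_on s A \<and> const_on s B) \<and> ag \<omega> s} = XX V Q (\<omega> \<union> SA \<union> SB)" for \<omega>
    unfolding XX_def SA_def SB_def using star_ag[of A] star_ag[of B] by (auto simp: ag_def)
  have set0: "{s\<in>configs V Q. True \<and> ag \<omega> s} = XX V Q \<omega>" for \<omega>
    unfolding XX_def by auto
  have XXpos: "card (XX V Q c) > 0" if "\<forall>e\<in>c. e \<subseteq> V" for c
    using XX_pos[OF fV fQ Qne that] .
  have Zpos: "ZZ (\<lambda>_. True) > 0"
  proof -
    have "ZZ (\<lambda>_. True) \<ge> w {} * real (card (XX V Q {}))"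
      unfolding ZZfk set0 using fE w0
      by (intro member_le_sum) auto
    moreover have "w {} > 0" unfolding w_def using r0 by simp
    moreover have "card (XX V Q {}) > 0" using XXpos by simp
    ultimately show ?thesis using mult_pos_pos[of "w {}" "real (card (XX V Q {}))"] by linarith
  qed
  have wmul: "w a * w b = w (a \<union> b) * w (a \<inter> b)" if "a \<subseteq> E" "b \<subseteq> E" for a b
  proof -
    have fa: "finite a" "finite b" using that fE finite_subset by auto
    have c1: "card a + card b = card (a \<union> b) + card (a \<inter> b)"
      using card_Un_Int[OF fa] by simp
    have "card (E - a) + card (E - b) = card ((E - a) \<union> (E - b)) + card ((E - a) \<inter> (E - b))"
      using card_Un_Int[of "E - a" "E - b"] fE by simp
    moreover have "(E - a) \<union> (E - b) = E - (a \<inter> b)" "(E - a) \<inter> (E - b) = E - (a \<union> b)" by auto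
    ultimately have c2: "card (E - a) + card (E - b) = card (E - (a \<union> b)) + card (E - (a \<inter> b))"
      by simp
    have "w a * w b = (1 - r) ^ (card a + card b) * r ^ (card (E - a) + card (E - b))"
      unfolding w_def by (simp add: power_add algebra_simps)
    also have "\<dots> = w (a \<union> b) * w (a \<inter> b)"
      unfolding w_def c1 c2 by (simp add: power_add algebra_simps)
    finally show ?thesis .
  qed
  have ineq1: "ZZ (\<lambda>s. const_on s A) * ZZ (\<lambda>s. const_on s B)
      \<le> ZZ (\<lambda>s. const_on s A \<and> const_on s B) * ZZ (\<lambda>_. True)"
    unfolding ZZfk setA setB setAB set0
  proof (rule AD[OF fE])
    fix a assume "a \<subseteq> E"
    show "0 \<le> w a * real (card (XX V Q (a \<union> SA))) \<and> 0 \<le> w a * real (card (XX V Q (a \<union> SB))) \<and>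
          0 \<le> w a * real (card (XX V Q (a \<union> SA \<union> SB))) \<and> 0 \<le> w a * real (card (XX V Q a))"
      using w0 by simp
  next
    fix a b assume a: "a \<subseteq> E" and b: "b \<subseteq> E"
    have fx: "finite (a \<union> SA)" using a fE finite_subset SAP by auto
    have xP: "a \<union> SA \<subseteq> pairsV V" using a EP SAP by auto
    have yV: "\<forall>e\<in>b \<union> SB. e \<subseteq> V" using b EP SAP pairs_sub by blast
    have sm: "card (XX V Q (a \<union> SA)) * card (XX V Q (b \<union> SB))
        \<le> card (XX V Q ((a \<union> SA) \<union> (b \<union> SB))) * card (XX V Q ((a \<union> SA) \<inter> (b \<union> SB)))"
      by (rule supermod[OF fV fQ Qne fx xP yV])
    have h1: "card (XX V Q ((a \<union> SA) \<inter> (b \<union> SB))) \<le> card (XX V Q (a \<inter> b))"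
      by (rule card_mono[OF XX_finite[OF fV fQ] XX_anti]) auto
    have h2: "(a \<union> SA) \<union> (b \<union> SB) = a \<union> b \<union> SA \<union> SB" by auto
    have sm2: "card (XX V Q (a \<union> SA)) * card (XX V Q (b \<union> SB))
        \<le> card (XX V Q (a \<union> b \<union> SA \<union> SB)) * card (XX V Q (a \<inter> b))"
      using le_trans[OF sm mult_le_mono2[OF h1]] unfolding h2 .
    have sm3: "real (card (XX V Q (a \<union> SA))) * real (card (XX V Q (b \<union> SB)))
        \<le> real (card (XX V Q (a \<union> b \<union> SA \<union> SB))) * real (card (XX V Q (a \<inter> b)))"
      using sm2 unfolding of_nat_mult[symmetric] of_nat_le_iff .
    have "w a * real (card (XX V Q (a \<union> SA))) * (w b * real (card (XX V Q (b \<union> SB))))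
       = (w a * w b) * (real (card (XX V Q (a \<union> SA))) * real (card (XX V Q (b \<union> SB))))"
      by (simp add: algebra_simps)
    also have "\<dots> \<le> (w a * w b) * (real (card (XX V Q (a \<union> b \<union> SA \<union> SB))) * real (card (XX V Q (a \<inter> b))))"
      using sm3 w0 by (intro mult_left_mono) auto
    also have "\<dots> = w (a \<union> b) * real (card (XX V Q ((a \<union> b) \<union> SA \<union> SB))) * (w (a \<inter> b) * real (card (XX V Q (a \<inter> b))))"
      using wmul[OF a b] by (simp add: algebra_simps)
    finally show "w a * real (card (XX V Q (a \<union> SA))) * (w b * real (card (XX V Q (b \<union> SB))))
       \<le> w (a \<union> b) * real (card (XX V Q ((a \<union> b) \<union> SA \<union> SB))) * (w (a \<inter> b) * real (card (XX V Q (a \<inter> b))))" .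
  qed
  have ineq2: "ZZ (\<lambda>s. const_on s A \<and> const_on s B) \<le> real q * ZZ (\<lambda>s. const_on s (A \<union> B))"
  proof -
    have pt: "real (card (XX V Q (\<omega> \<union> SA \<union> SB)))
        \<le> real q * real (card {s\<in>configs V Q. const_on s (A \<union> B) \<and> ag \<omega> s})" if "\<omega> \<in> Pow E" for \<omega>
    proof (cases "A = {} \<or> B = {}")
      case True
      then have "{s\<in>configs V Q. const_on s (A \<union> B) \<and> ag \<omega> s}
          = {s\<in>configs V Q. (const_on s A \<and> const_on s B) \<and> ag \<omega> s}"
        by (elim disjE) (simp_all add: const_on_empty)
      moreover have "card (XX V Q (\<omega> \<union> SA \<union> SB)) \<le> q * card (XX V Q (\<omega> \<union> SA \<union> SB))"
        using assms(4) by simp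
      ultimately show ?thesis unfolding setAB of_nat_mult[symmetric] of_nat_le_iff by simp
    next
      case False
      then obtain a0 b0 where ab: "a0 \<in> A" "b0 \<in> B" by auto
      have "{s\<in>configs V Q. const_on s (A \<union> B) \<and> ag \<omega> s}
          = {s\<in>XX V Q (\<omega> \<union> SA \<union> SB). s a0 = s b0}"
        unfolding setAB[symmetric] const_on_Un[OF ab] by blast
      also have "\<dots> = XX V Q (insert {a0, b0} (\<omega> \<union> SA \<union> SB))" by (simp add: XX_insert_pair)
      finally have eq: "{s\<in>configs V Q. const_on s (A \<union> B) \<and> ag \<omega> s} = XX V Q (insert {a0, b0} (\<omega> \<union> SA \<union> SB))" .
      have cV: "\<forall>e\<in>\<omega> \<union> SA \<union> SB. e \<subseteq> V" using that EP SAP pairs_sub by blast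
      have "card (XX V Q (\<omega> \<union> SA \<union> SB)) \<le> q * card (XX V Q (insert {a0, b0} (\<omega> \<union> SA \<union> SB)))"
        using step_le[OF cV _ _ fQ Qne] ab assms(3,6,7) by auto
      then show ?thesis unfolding eq of_nat_mult[symmetric] of_nat_le_iff .
    qed
    show ?thesis unfolding ZZfk setAB sum_distrib_left
    proof (rule sum_mono)
      fix \<omega> :: "'v set set" assume "\<omega> \<in> Pow E"
      from mult_left_mono[OF pt[OF this] w0[of \<omega>]]
      show "w \<omega> * real (card (XX V Q (\<omega> \<union> SA \<union> SB)))
          \<le> real q * (w \<omega> * real (card {s \<in> configs V Q. const_on s (A \<union> B) \<and> ag \<omega> s}))"
        by (simp only: mult_ac)
    qed
  qed
  have qpos: "real q > 0" using assms(4) by simp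
  show ?thesis
  proof
    show "potts_prob J V E Q (\<lambda>s. const_on s A) * potts_prob J V E Q (\<lambda>s. const_on s B)
        \<le> potts_prob J V E Q (\<lambda>s. const_on s A \<and> const_on s B)"
    proof -
      let ?Z = "ZZ (\<lambda>_. True)"
      have "ZZ (\<lambda>s. const_on s A) / ?Z * (ZZ (\<lambda>s. const_on s B) / ?Z)
          = (ZZ (\<lambda>s. const_on s A) * ZZ (\<lambda>s. const_on s B)) / (?Z * ?Z)" by simp
      also have "\<dots> \<le> (ZZ (\<lambda>s. const_on s A \<and> const_on s B) * ?Z) / (?Z * ?Z)"
        using ineq1 Zpos by (intro divide_right_mono) auto
      also have "\<dots> = ZZ (\<lambda>s. const_on s A \<and> const_on s B) / ?Z" using Zpos by simp
      finally show ?thesis unfolding pp .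
    qed
  next
    show "1 / real q * potts_prob J V E Q (\<lambda>s. const_on s A \<and> const_on s B)
        \<le> potts_prob J V E Q (\<lambda>s. const_on s (A \<union> B))"
    proof -
      let ?Z = "ZZ (\<lambda>_. True)"
      have "ZZ (\<lambda>s. const_on s A \<and> const_on s B) / real q \<le> ZZ (\<lambda>s. const_on s (A \<union> B))"
        using ineq2 qpos by (simp add: divide_le_eq mult.commute)
      then have "ZZ (\<lambda>s. const_on s A \<and> const_on s B) / real q / ?Z \<le> ZZ (\<lambda>s. const_on s (A \<union> B)) / ?Z"
        using Zpos by (intro divide_right_mono) auto
      then show ?thesis unfolding pp by simp
    qed
  qed
qed




end
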